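(* Let $\mathfrak p,\mathfrak q$ be positive integers, $\omega=\mathfrak p/\mathfrak q$, $\nu=1/\mathfrak q$, and $\varepsilon=\omega^{2/(\alpha+1)}$. Then the function $$h(x,\tau)=\sum_{j=1}^n m_j\big[\phi_\alpha(\|x-\varepsilon x_j(\tau)\|)-\phi_\alpha(\|x\|)\big],\qquad x_j(\tau)=e^{-J\omega\tau/\nu}q_j(\tau/\nu),$$ is $2\pi$-periodic in $\tau$, and $\nabla_xh(x,\tau)=\mathcal O(\varepsilon^2)$.
   Context: Let $n\ge2$, $\alpha\ge1$, masses $m_1,\dots,m_n>0$ with $\sum_j m_j=1$, and let $q_1,\dots,q_n:\mathbb R\to\mathbb R^2$ be a collision-free $2\pi$-periodic solution of the $n$-body problem $\ddot q_j=-\sum_{k\ne j}m_k\frac{q_j-q_k}{\|q_j-q_k\|^{\alpha+1}}$ with center of mass $\sum_jm_jq_j(t)=0$. $\phi_\alpha(\lambda)=\frac1{\alpha-1}\lambda^{1-\alpha}$ for $\alpha>1$, $\phi_1(\lambda)=-\log\lambda$. $J=\begin{pmatrix}0&1\\-1&0\end{pmatrix}$, $e^{J\theta}=\cos\theta\,I+\sin\theta\,J$. The estimate $\mathcal O(\varepsilon^2)$ is meant as $\varepsilon\to0$, uniformly in $\tau$ and in $x$ ranging over compact subsets of $\mathbb R^2\setminus\{0\}$. *)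

theory Defs
  imports "HOL-Analysis.Analysis"
begin

definition Jmat :: "real^2^2" where
  "Jmat = vector [vector [0, 1], vector [-1, 0]]"

definition expJ :: "real \<Rightarrow> real^2^2" where
  "expJ \<theta> = cos \<theta> *\<^sub>R mat 1 + sin \<theta> *\<^sub>R Jmat"

definition phi :: "real \<Rightarrow> real \<Rightarrow> real" where
  "phi \<alpha> r = (if \<alpha> = 1 then - ln r else (1 / (\<alpha> - 1)) * r powr (1 - \<alpha>))"

definition omega :: "nat \<Rightarrow> nat \<Rightarrow> real" where
  "omega pp qq = real pp / real qq"

definition nu :: "nat \<Rightarrow> real" where
  "nu qq = 1 / real qq"

definition eps :: "real \<Rightarrow> nat \<Rightarrow> nat \<Rightarrow> real" where
  "eps \<alpha> pp qq = omega pp qq powr (2 / (\<alpha> + 1))"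

definition xbody :: "(nat \<Rightarrow> real \<Rightarrow> real^2) \<Rightarrow> nat \<Rightarrow> nat \<Rightarrow> nat \<Rightarrow> real \<Rightarrow> real^2" where
  "xbody q pp qq j \<tau> = expJ (- omega pp qq * \<tau> / nu qq) *v q j (\<tau> / nu qq)"

definition hfun :: "nat \<Rightarrow> real \<Rightarrow> (nat \<Rightarrow> real) \<Rightarrow> (nat \<Rightarrow> real \<Rightarrow> real^2)
    \<Rightarrow> nat \<Rightarrow> nat \<Rightarrow> real^2 \<Rightarrow> real \<Rightarrow> real" where
  "hfun n \<alpha> m q pp qq x \<tau> =
     (\<Sum>j\<in>{1..n}. m j * (phi \<alpha> (norm (x - eps \<alpha> pp qq *\<^sub>R xbody q pp qq j \<tau>)) - phi \<alpha> (norm x)))"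

end

theory Submission
  imports Defs
begin


lemma taylor_powr:
  fixes g a s t :: real
  assumes g: "g > 0" and a: "a > 0" and s: "s \<ge> a" and st: "s + t \<ge> a"
  shows "\<bar>(s+t) powr (-g) - s powr (-g) + g * s powr (-g-1) * t\<bar> \<le> g*(g+1) * a powr (-g-2) / 2 * t^2"
proof (cases "t = 0")
  case True then show ?thesis by simp
next
  case False
  define diff :: "nat \<Rightarrow> real \<Rightarrow> real" where
    "diff = (\<lambda>m u. if m = 0 then u powr (-g) else if m = 1 then - g * u powr (-g-1) else g*(g+1) * u powr (-g-2))"
  have D: "\<forall>(m::nat) (u::real). m < 2 \<and> a \<le> u \<and> u \<le> max s (s+t) \<longrightarrow> DERIV (diff m) u :> diff (Suc m) u"
  proof (intro allI impI)
    fix m :: nat and u :: real assume H: "m < 2 \<and> a \<le> u \<and> u \<le> max s (s+t)"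
    then have u: "u > 0" using a by linarith
    show "DERIV (diff m) u :> diff (Suc m) u"
    proof (cases "m = 0")
      case True
      then show ?thesis unfolding diff_def using u
        by (auto intro!: derivative_eq_intros simp: field_simps)
    next
      case False
      then have "m = 1" using H by auto
      then show ?thesis unfolding diff_def using u
        by (auto intro!: derivative_eq_intros simp: field_simps)
    qed
  qed
  obtain \<xi> where xi: "(if s + t < s then s + t < \<xi> \<and> \<xi> < s else s < \<xi> \<and> \<xi> < s + t)"
    and eq: "(s+t) powr (-g) = (\<Sum>m<2. (diff m s / fact m) * ((s+t) - s)^m) + (diff 2 \<xi> / fact 2) * ((s+t) - s)^2"
    using Taylor[of 2 diff "\<lambda>u. u powr (-g)" a "max s (s+t)" s "s+t", OF _ _ D] s st False
    by (auto simp: diff_def)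
  have xia: "\<xi> \<ge> a" using xi s st by (auto split: if_splits)
  have "(s+t) powr (-g) - s powr (-g) + g * s powr (-g-1) * t = g*(g+1) * \<xi> powr (-g-2) / 2 * t^2"
    using eq by (simp add: diff_def eval_nat_numeral)
  moreover have "\<xi> powr (-g-2) \<le> a powr (-g-2)"
    using xia a g by (intro powr_mono2') auto
  moreover have "g*(g+1) * \<xi> powr (-g-2) / 2 * t^2 \<le> g*(g+1) * a powr (-g-2) / 2 * t^2"
    using calculation(2) g by (intro mult_right_mono divide_right_mono mult_left_mono) auto
  moreover have "g*(g+1) * \<xi> powr (-g-2) / 2 * t^2 \<ge> 0" using g by simp
  ultimately show ?thesis by simp
qed



lemma powr_sq_half: "r \<ge> 0 \<Longrightarrow> (r^2) powr (-(b/2)) = r powr (-b)" for r b :: real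
proof (cases "r = 0")
  case True then show ?thesis by simp
next
  case False
  assume "r \<ge> 0" then have "r > 0" using False by simp
  then have "r^2 = r powr 2" by (simp add: powr_realpow)
  then have "(r^2) powr (-(b/2)) = r powr (2 * (-(b/2)))" by (simp add: powr_powr)
  then show ?thesis by simp
qed

definition Ck :: "real \<Rightarrow> real \<Rightarrow> real \<Rightarrow> real" where
  "Ck d B b = (let g = b/2; a = d^2/4; M = g*(g+1) * a powr (-g-2) / 2; N = g * a powr (-g-1); P = 2*B+1
     in B*(M*P^2+N) + M*P^2 + N*P)"

lemma core:
  fixes x :: "'a::real_inner" and v :: "nat \<Rightarrow> 'a" and m :: "nat \<Rightarrow> real"
  assumes fin: "finite S" and mnn: "\<forall>j\<in>S. m j \<ge> 0" and ms: "sum m S = 1"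
    and vs: "(\<Sum>j\<in>S. m j *\<^sub>R v j) = 0" and vb: "\<forall>j\<in>S. norm (v j) \<le> \<rho>"
    and d: "d > 0" "d \<le> norm x" "norm x \<le> B" and rho: "0 \<le> \<rho>" "\<rho> \<le> d/2" "\<rho> \<le> 1" and b: "b > 0"
  shows "norm (\<Sum>j\<in>S. m j *\<^sub>R (norm x powr (-b) *\<^sub>R x - norm (x - v j) powr (-b) *\<^sub>R (x - v j)))
          \<le> Ck d B b * \<rho>^2"
proof -
  define g where "g = b/2"
  define a where "a = d^2/4"
  define M where "M = g*(g+1) * a powr (-g-2) / 2"
  define N where "N = g * a powr (-g-1)"
  define P where "P = 2*B+1"
  have C: "Ck d B b = B*(M*P^2+N) + M*P^2 + N*P"
    unfolding Ck_def M_def N_def P_def a_def g_def Let_def by simp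
  have g: "g > 0" using b g_def by simp
  have a: "a > 0" unfolding a_def using d by simp
  have B: "B \<ge> d" using d by linarith
  have M0: "M \<ge> 0" and N0: "N \<ge> 0" using g a unfolding M_def N_def by auto
  have P0: "P \<ge> 0" using B d P_def by simp
  define s where "s = norm x ^ 2"
  define t where "t = (\<lambda>j. norm (x - v j)^2 - s)"
  define D where "D = (\<lambda>j. (s + t j) powr (-g) - s powr (-g))"
  define E where "E = (\<lambda>j. D j + g * s powr (-g-1) * t j)"
  have s_a: "s \<ge> a" unfolding s_def a_def using d
  proof -
    have "d^2 \<le> norm x^2" using d by (intro power_mono) auto
    moreover have "d^2/4 \<le> d^2" by simp
    ultimately show "d^2/4 \<le> norm x^2" by linarith
  qed
  have st_a: "s + t j \<ge> a" if "j \<in> S" for j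
  proof -
    have "norm (x - v j) \<ge> norm x - norm (v j)" by (rule norm_triangle_ineq2)
    then have "norm (x - v j) \<ge> d/2" using vb that rho d by force
    then have "norm (x - v j)^2 \<ge> (d/2)^2" using d by (intro power_mono) auto
    then show ?thesis unfolding t_def a_def by (simp add: power_divide)
  qed
  have t_eq: "t j = - 2 * (x \<bullet> v j) + norm (v j)^2" for j
    unfolding t_def s_def by (simp add: power2_norm_eq_inner inner_diff_left inner_diff_right inner_commute)
  have t_b: "\<bar>t j\<bar> \<le> P * \<rho>" if "j \<in> S" for j
  proof -
    have "\<bar>x \<bullet> v j\<bar> \<le> norm x * norm (v j)" by (rule Cauchy_Schwarz_ineq2)
    also have "\<dots> \<le> B * \<rho>" using d vb that by (intro mult_mono) auto
    finally have 1: "\<bar>x \<bullet> v j\<bar> \<le> B * \<rho>" .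
    have "norm (v j)^2 \<le> \<rho>^2" using vb that by (intro power_mono) auto
    also have "\<rho>^2 \<le> \<rho>" using rho by (simp add: power2_eq_square mult_left_le)
    finally have 2: "norm (v j)^2 \<le> \<rho>" .
    have "\<bar>t j\<bar> \<le> \<bar>-2*(x \<bullet> v j)\<bar> + \<bar>norm (v j)^2\<bar>" unfolding t_eq by (rule abs_triangle_ineq)
    also have "\<dots> = 2 * \<bar>x \<bullet> v j\<bar> + norm (v j)^2" by (simp add: abs_mult)
    finally show ?thesis using 1 2 unfolding P_def by (simp add: algebra_simps)
  qed
  have E_b: "\<bar>E j\<bar> \<le> M * P^2 * \<rho>^2" if "j \<in> S" for j
  proof -
    have "\<bar>E j\<bar> \<le> M * (t j)^2"
      using taylor_powr[OF g a s_a st_a[OF that]] unfolding E_def D_def M_def by simp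
    also have "(t j)^2 \<le> (P*\<rho>)^2" using t_b[OF that]
      by (metis abs_ge_zero power2_abs power_mono)
    finally show ?thesis using M0 by (simp add: mult_left_mono power_mult_distrib mult.assoc)
  qed
  have gs: "0 \<le> g * s powr (-g-1)" "g * s powr (-g-1) \<le> N"
    using g a s_a unfolding N_def by (auto intro!: mult_left_mono powr_mono2')
  have D_b: "\<bar>D j\<bar> \<le> (M*P^2 + N*P) * \<rho>" if "j \<in> S" for j
  proof -
    have "D j = E j - g * s powr (-g-1) * t j" unfolding E_def by simp
    then have "\<bar>D j\<bar> \<le> \<bar>E j\<bar> + \<bar>g * s powr (-g-1) * t j\<bar>" by (simp add: abs_triangle_ineq4)
    moreover have "\<bar>g * s powr (-g-1) * t j\<bar> = g * s powr (-g-1) * \<bar>t j\<bar>" using gs g by (simp add: abs_mult)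
    ultimately have "\<bar>D j\<bar> \<le> \<bar>E j\<bar> + g * s powr (-g-1) * \<bar>t j\<bar>" by simp
    also have "\<dots> \<le> M * P^2 * \<rho>^2 + N * (P * \<rho>)"
      using E_b[OF that] t_b[OF that] gs by (intro add_mono mult_mono) auto
    also have "M * P^2 * \<rho>^2 \<le> M * P^2 * \<rho>" using M0 rho
      by (intro mult_left_mono) (auto simp: power2_eq_square mult_left_le)
    finally show ?thesis by (simp add: algebra_simps)
  qed
  have sum_t: "(\<Sum>j\<in>S. m j * t j) = (\<Sum>j\<in>S. m j * norm (v j)^2)"
  proof -
    have "(\<Sum>j\<in>S. m j * t j) = (\<Sum>j\<in>S. m j * norm (v j)^2 - 2 * (x \<bullet> (m j *\<^sub>R v j)))"
      by (rule sum.cong) (auto simp: t_eq algebra_simps)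
    also have "\<dots> = (\<Sum>j\<in>S. m j * norm (v j)^2) - 2 * (x \<bullet> (\<Sum>j\<in>S. m j *\<^sub>R v j))"
      by (simp add: sum_subtractf inner_sum_right sum_distrib_left)
    finally show ?thesis using vs by simp
  qed
  have sum_t_b: "\<bar>\<Sum>j\<in>S. m j * t j\<bar> \<le> \<rho>^2"
  proof -
    have "(\<Sum>j\<in>S. m j * norm (v j)^2) \<le> (\<Sum>j\<in>S. m j * \<rho>^2)"
      using mnn vb by (intro sum_mono mult_left_mono power_mono) auto
    also have "\<dots> = \<rho>^2" using ms by (simp add: sum_distrib_right[symmetric])
    finally show ?thesis unfolding sum_t using mnn by (simp add: sum_nonneg)
  qed
  have sumD_b: "\<bar>\<Sum>j\<in>S. m j * D j\<bar> \<le> (M*P^2 + N) * \<rho>^2"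
  proof -
    have "(\<Sum>j\<in>S. m j * D j) = (\<Sum>j\<in>S. m j * E j) - g * s powr (-g-1) * (\<Sum>j\<in>S. m j * t j)"
      unfolding E_def by (simp add: algebra_simps sum.distrib sum_distrib_left sum_subtractf)
    then have "\<bar>\<Sum>j\<in>S. m j * D j\<bar> \<le> (\<Sum>j\<in>S. m j * \<bar>E j\<bar>) + g * s powr (-g-1) * \<bar>\<Sum>j\<in>S. m j * t j\<bar>"
    proof -
      have "\<bar>\<Sum>j\<in>S. m j * D j\<bar> \<le> \<bar>\<Sum>j\<in>S. m j * E j\<bar> + \<bar>g * s powr (-g-1) * (\<Sum>j\<in>S. m j * t j)\<bar>"
        unfolding \<open>(\<Sum>j\<in>S. m j * D j) = _\<close> by (rule abs_triangle_ineq4)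
      also have "\<bar>\<Sum>j\<in>S. m j * E j\<bar> \<le> (\<Sum>j\<in>S. \<bar>m j * E j\<bar>)" by (rule sum_abs)
      also have "(\<Sum>j\<in>S. \<bar>m j * E j\<bar>) = (\<Sum>j\<in>S. m j * \<bar>E j\<bar>)"
        using mnn by (intro sum.cong) (auto simp: abs_mult)
      also have "\<bar>g * s powr (-g-1) * (\<Sum>j\<in>S. m j * t j)\<bar> = g * s powr (-g-1) * \<bar>\<Sum>j\<in>S. m j * t j\<bar>"
        using gs g by (simp add: abs_mult)
      finally show ?thesis by simp
    qed
    also have "\<dots> \<le> (\<Sum>j\<in>S. m j * (M * P^2 * \<rho>^2)) + N * \<rho>^2"
      using E_b mnn gs sum_t_b by (intro add_mono sum_mono mult_left_mono mult_mono) auto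
    also have "(\<Sum>j\<in>S. m j * (M * P^2 * \<rho>^2)) = M * P^2 * \<rho>^2"
      using ms by (simp add: sum_distrib_right[symmetric])
    finally show ?thesis by (simp add: algebra_simps)
  qed
  have termeq: "norm x powr (-b) *\<^sub>R x - norm (x - v j) powr (-b) *\<^sub>R (x - v j)
      = (- D j) *\<^sub>R x + D j *\<^sub>R v j + s powr (-g) *\<^sub>R v j" for j
  proof -
    have 1: "norm x powr (-b) = s powr (-g)" unfolding s_def g_def using powr_sq_half[of "norm x" b] by simp
    have 2: "norm (x - v j) powr (-b) = (s + t j) powr (-g)" unfolding t_def g_def using powr_sq_half[of "norm (x - v j)" b] by simp
    show ?thesis unfolding 1 2 D_def by (simp add: algebra_simps)
  qed
  have "(\<Sum>j\<in>S. m j *\<^sub>R (norm x powr (-b) *\<^sub>R x - norm (x - v j) powr (-b) *\<^sub>R (x - v j)))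
     = (- (\<Sum>j\<in>S. m j * D j)) *\<^sub>R x + (\<Sum>j\<in>S. (m j * D j) *\<^sub>R v j) + s powr (-g) *\<^sub>R (\<Sum>j\<in>S. m j *\<^sub>R v j)"
  proof -
    have "(\<Sum>j\<in>S. m j *\<^sub>R (norm x powr (-b) *\<^sub>R x - norm (x - v j) powr (-b) *\<^sub>R (x - v j)))
      = (\<Sum>j\<in>S. (- (m j * D j)) *\<^sub>R x + (m j * D j) *\<^sub>R v j + s powr (-g) *\<^sub>R (m j *\<^sub>R v j))"
      unfolding termeq by (rule sum.cong) (auto simp: algebra_simps)
    also have "\<dots> = (\<Sum>j\<in>S. (- (m j * D j)) *\<^sub>R x) + (\<Sum>j\<in>S. (m j * D j) *\<^sub>R v j) + (\<Sum>j\<in>S. s powr (-g) *\<^sub>R (m j *\<^sub>R v j))"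
      by (simp only: sum.distrib)
    also have "\<dots> = (- (\<Sum>j\<in>S. m j * D j)) *\<^sub>R x + (\<Sum>j\<in>S. (m j * D j) *\<^sub>R v j) + s powr (-g) *\<^sub>R (\<Sum>j\<in>S. m j *\<^sub>R v j)"
      by (simp add: scaleR_sum_left scaleR_sum_right sum_negf)
    finally show ?thesis .
  qed
  also have "\<dots> = (- (\<Sum>j\<in>S. m j * D j)) *\<^sub>R x + (\<Sum>j\<in>S. (m j * D j) *\<^sub>R v j)" using vs by simp
  finally have eq: "(\<Sum>j\<in>S. m j *\<^sub>R (norm x powr (-b) *\<^sub>R x - norm (x - v j) powr (-b) *\<^sub>R (x - v j)))
     = (- (\<Sum>j\<in>S. m j * D j)) *\<^sub>R x + (\<Sum>j\<in>S. (m j * D j) *\<^sub>R v j)" .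
  have n1: "norm ((- (\<Sum>j\<in>S. m j * D j)) *\<^sub>R x) \<le> (M*P^2 + N) * \<rho>^2 * B"
    using sumD_b d by (simp add: mult_mono)
  have "norm (\<Sum>j\<in>S. (m j * D j) *\<^sub>R v j) \<le> (\<Sum>j\<in>S. norm ((m j * D j) *\<^sub>R v j))" by (rule norm_sum)
  also have "\<dots> \<le> (\<Sum>j\<in>S. m j * ((M*P^2 + N*P) * \<rho> * \<rho>))"
  proof (rule sum_mono)
    fix j assume j: "j \<in> S"
    have "norm ((m j * D j) *\<^sub>R v j) = m j * (\<bar>D j\<bar> * norm (v j))" using mnn j by (simp add: abs_mult)
    also have "\<dots> \<le> m j * ((M*P^2 + N*P) * \<rho> * \<rho>)"
      using mnn j D_b[OF j] vb by (intro mult_left_mono mult_mono) auto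
    finally show "norm ((m j * D j) *\<^sub>R v j) \<le> m j * ((M*P^2 + N*P) * \<rho> * \<rho>)" .
  qed
  also have "\<dots> = (M*P^2 + N*P) * \<rho>^2" using ms by (simp add: sum_distrib_right[symmetric] power2_eq_square)
  finally have n2: "norm (\<Sum>j\<in>S. (m j * D j) *\<^sub>R v j) \<le> (M*P^2 + N*P) * \<rho>^2" .
  show ?thesis unfolding eq C using norm_triangle_le[OF add_mono[OF n1 n2]]
    by (simp add: algebra_simps)
qed



lemma deriv_phi:
  assumes "\<alpha> \<ge> 1" "r > 0"
  shows "DERIV (phi \<alpha>) r :> - (r powr (-\<alpha>))"
proof (cases "\<alpha> = 1")
  case True
  have "phi \<alpha> = (\<lambda>r. - ln r)" using True by (auto simp: phi_def fun_eq_iff)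
  moreover have "DERIV (\<lambda>r. - ln r) r :> - (1 / r)" using assms
    by (auto intro!: derivative_eq_intros)
  moreover have "r powr (-\<alpha>) = 1 / r" using True assms by (simp add: powr_minus divide_inverse)
  ultimately show ?thesis by simp
next
  case False
  have "phi \<alpha> = (\<lambda>r. (1 / (\<alpha> - 1)) * r powr (1 - \<alpha>))" using False by (auto simp: phi_def fun_eq_iff)
  moreover have "DERIV (\<lambda>r. (1 / (\<alpha> - 1)) * r powr (1 - \<alpha>)) r :> (1 / (\<alpha> - 1)) * ((1 - \<alpha>) * r powr (1 - \<alpha> - 1))"
    using assms False by (auto intro!: derivative_eq_intros)
  moreover have "(1 / (\<alpha> - 1)) * ((1 - \<alpha>) * r powr (1 - \<alpha> - 1)) = - (r powr (-\<alpha>))"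
    using False by (simp add: field_simps)
  ultimately show ?thesis by simp
qed

lemma grad_phi:
  fixes x c :: "'a::real_inner"
  assumes "\<alpha> \<ge> 1" "x \<noteq> c"
  shows "GDERIV (\<lambda>y. phi \<alpha> (norm (y - c))) x :> (- (norm (x - c) powr (-(\<alpha>+1)))) *\<^sub>R (x - c)"
proof -
  have xc: "x - c \<noteq> 0" using assms by simp
  have "((\<lambda>y. norm (y - c)) has_derivative (\<lambda>h. (h - 0) \<bullet> sgn (x - c))) (at x)"
    by (rule has_derivative_compose[OF has_derivative_diff[OF has_derivative_ident has_derivative_const] has_derivative_norm[OF xc]])
  then have n: "GDERIV (\<lambda>y. norm (y - c)) x :> sgn (x - c)" unfolding gderiv_def by simp
  have d: "DERIV (phi \<alpha>) (norm (x - c)) :> - (norm (x - c) powr (-\<alpha>))"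
    using deriv_phi assms xc by simp
  have g: "GDERIV (\<lambda>y. phi \<alpha> (norm (y - c))) x :> (- (norm (x - c) powr (-\<alpha>))) *\<^sub>R sgn (x - c)"
    by (rule GDERIV_DERIV_compose[OF n d])
  have r: "norm (x - c) > 0" using xc by simp
  have "norm (x - c) powr (-(\<alpha>+1)) = norm (x - c) powr (-\<alpha>) * norm (x - c) powr (-1)"
    using powr_add[of "norm (x - c)" "-\<alpha>" "-1"] by (simp add: algebra_simps)
  also have "norm (x - c) powr (-1) = 1 / norm (x - c)" using r by (simp add: powr_minus divide_inverse)
  finally have "(- (norm (x - c) powr (-\<alpha>))) *\<^sub>R sgn (x - c) = (- (norm (x - c) powr (-(\<alpha>+1)))) *\<^sub>R (x - c)"
    by (simp add: sgn_div_norm divide_inverse)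
  with g show ?thesis by simp
qed

lemma expJ_comp:
  "(expJ \<theta> *v y) $ 1 = cos \<theta> * y$1 + sin \<theta> * y$2"
  "(expJ \<theta> *v y) $ 2 = - sin \<theta> * y$1 + cos \<theta> * y$2"
  by (simp_all add: expJ_def Jmat_def matrix_vector_mult_def sum_2 mat_def)

lemma norm_expJ: "norm (expJ \<theta> *v y) = norm (y :: real^2)"
proof -
  have e: "(cos \<theta> * y$1 + sin \<theta> * y$2) * (cos \<theta> * y$1 + sin \<theta> * y$2)
     + (- sin \<theta> * y$1 + cos \<theta> * y$2) * (- sin \<theta> * y$1 + cos \<theta> * y$2) = y$1 * y$1 + y$2 * y$2"
    using sin_cos_squared_add[of \<theta>] by algebra
  show ?thesis
    unfolding norm_eq_sqrt_inner inner_vec_def sum_2 expJ_comp inner_real_def e ..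
qed

lemma expJ_sum: "expJ \<theta> *v (\<Sum>j\<in>S. m j *\<^sub>R y j) = (\<Sum>j\<in>S. m j *\<^sub>R (expJ \<theta> *v y j))"
  by (simp add: linear_sum[OF matrix_vector_mul_linear] matrix_vector_mult_scaleR)

lemma expJ_periodic: "expJ (\<theta> - 2 * pi * real k) = expJ \<theta>"
proof -
  have "cos (\<theta> - 2 * pi * real k) = cos \<theta>" "sin (\<theta> - 2 * pi * real k) = sin \<theta>"
    unfolding cos_diff sin_diff using cos_2npi[of k] sin_2npi[of k] by (simp_all add: ac_simps)
  then show ?thesis by (simp add: expJ_def)
qed

lemma per_nat:
  assumes "\<forall>t. f (t + 2 * pi) = f t"
  shows "f (t + 2 * pi * real k) = f t"
proof (induction k)
  case 0 then show ?case by simp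
next
  case (Suc k)
  have e: "t + 2 * pi * real (Suc k) = (t + 2 * pi * real k) + 2 * pi" by (simp add: distrib_left)
  have "f ((t + 2 * pi * real k) + 2 * pi) = f (t + 2 * pi * real k)" using assms by blast
  then show ?case unfolding e using Suc by simp
qed

lemma per_int:
  assumes "\<forall>t. f (t + 2 * pi) = f t"
  shows "f (t + 2 * pi * real_of_int k) = f t"
proof (cases "k \<ge> 0")
  case True
  then show ?thesis using per_nat[OF assms, of t "nat k"] by simp
next
  case False
  then have k: "real_of_int k = - real (nat (-k))" by simp
  have e: "t = (t + 2 * pi * real_of_int k) + 2 * pi * real (nat (-k))" unfolding k by simp
  have "f ((t + 2 * pi * real_of_int k) + 2 * pi * real (nat (-k))) = f (t + 2 * pi * real_of_int k)"
    by (rule per_nat[OF assms])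
  then show ?thesis by (metis e)
qed

lemma per_bounded:
  fixes f :: "real \<Rightarrow> 'a::real_normed_vector"
  assumes "\<forall>t. f (t + 2 * pi) = f t" "\<forall>t. norm (f t) \<le> R \<or> t < 0 \<or> t > 2 * pi"
  shows "norm (f t) \<le> R"
proof -
  define k where "k = \<lfloor>t / (2*pi)\<rfloor>"
  define t' where "t' = t - 2 * pi * real_of_int k"
  have "real_of_int k \<le> t / (2*pi)" "t / (2*pi) < real_of_int k + 1" unfolding k_def by linarith+
  then have "2*pi* real_of_int k \<le> t" "t < 2*pi*(real_of_int k + 1)"
    using pi_gt_zero by (simp_all add: field_simps)
  then have "0 \<le> t'" "t' \<le> 2 * pi" unfolding t'_def by (simp_all add: algebra_simps)
  then have "norm (f t') \<le> R" using assms(2) by force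
  moreover have "f (t' + 2 * pi * real_of_int k) = f t'" by (rule per_int[OF assms(1)])
  ultimately show ?thesis unfolding t'_def by simp
qed



theorem proposition2:
  fixes n :: nat and \<alpha> :: real and m :: "nat \<Rightarrow> real"
    and q qd :: "nat \<Rightarrow> real \<Rightarrow> real^2"
  assumes n2: "n \<ge> 2"
    and alpha: "\<alpha> \<ge> 1"
    and mpos: "\<forall>j\<in>{1..n}. m j > 0"
    and msum: "(\<Sum>j\<in>{1..n}. m j) = 1"
    and vel: "\<forall>j\<in>{1..n}. \<forall>t. (q j has_vector_derivative qd j t) (at t)"
    and eqn: "\<forall>j\<in>{1..n}. \<forall>t. (qd j has_vector_derivative
               (- (\<Sum>k\<in>{1..n} - {j}. m k *\<^sub>R ((1 / norm (q j t - q k t) powr (\<alpha> + 1)) *\<^sub>R (q j t - q k t)))))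
               (at t)"
    and nocoll: "\<forall>j\<in>{1..n}. \<forall>k\<in>{1..n}. \<forall>t. j \<noteq> k \<longrightarrow> q j t \<noteq> q k t"
    and per: "\<forall>j\<in>{1..n}. \<forall>t. q j (t + 2 * pi) = q j t"
    and com: "\<forall>t. (\<Sum>j\<in>{1..n}. m j *\<^sub>R q j t) = 0"
  shows "(\<forall>pp qq. pp > 0 \<longrightarrow> qq > 0 \<longrightarrow>
            (\<forall>x \<tau>. hfun n \<alpha> m q pp qq x (\<tau> + 2 * pi) = hfun n \<alpha> m q pp qq x \<tau>))
       \<and> (\<forall>K. compact K \<and> 0 \<notin> K \<longrightarrow>
            (\<exists>C \<delta>. \<delta> > 0 \<and>
              (\<forall>pp qq. pp > 0 \<longrightarrow> qq > 0 \<longrightarrow> eps \<alpha> pp qq < \<delta> \<longrightarrow>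
                (\<forall>\<tau>. \<forall>x\<in>K. \<exists>g. (GDERIV (\<lambda>y. hfun n \<alpha> m q pp qq y \<tau>) x :> g)
                      \<and> norm g \<le> C * (eps \<alpha> pp qq)\<^sup>2))))"
proof (intro conjI allI impI)
  fix pp qq :: nat and x :: "real^2" and \<tau> :: real
  assume pp: "pp > 0" and qq: "qq > 0"
  have xb: "xbody q pp qq j (\<tau> + 2 * pi) = xbody q pp qq j \<tau>" if j: "j \<in> {1..n}" for j
  proof -
    have a1: "- omega pp qq * (\<tau> + 2 * pi) / nu qq = - omega pp qq * \<tau> / nu qq - 2 * pi * real pp"
      unfolding omega_def nu_def using qq by (simp add: field_simps)
    have a2: "(\<tau> + 2 * pi) / nu qq = \<tau> / nu qq + 2 * pi * real qq"
      unfolding nu_def using qq by (simp add: field_simps)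
    have pj: "\<forall>t. q j (t + 2 * pi) = q j t" using per j by blast
    show ?thesis unfolding xbody_def a1 a2 expJ_periodic per_nat[OF pj] ..
  qed
  show "hfun n \<alpha> m q pp qq x (\<tau> + 2 * pi) = hfun n \<alpha> m q pp qq x \<tau>"
    unfolding hfun_def by (rule sum.cong) (simp_all add: xb)
next
  fix K :: "(real^2) set"
  assume K: "compact K \<and> 0 \<notin> K"
  obtain d where d: "d > 0" "\<forall>x\<in>K. d \<le> norm x"
    using separate_point_closed[OF compact_imp_closed[of K] _] K by (metis dist_0_norm)
  obtain B where B: "\<forall>x\<in>K. norm x \<le> B"
    using compact_imp_bounded[of K] K bounded_iff by blast
  have cont: "continuous_on {0..2*pi} (q j)" if "j \<in> {1..n}" for j
    by (rule continuous_on_vector_derivative[where f'="qd j"])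
       (use vel that in \<open>blast intro: has_vector_derivative_at_within\<close>)
  have "compact (\<Union>j\<in>{1..n}. q j ` {0..2*pi})"
    using cont by (intro compact_UN) (auto intro!: compact_continuous_image)
  then obtain R where R: "R > 0" "\<forall>y\<in>(\<Union>j\<in>{1..n}. q j ` {0..2*pi}). norm y \<le> R"
    using compact_imp_bounded bounded_pos by metis
  have qR: "norm (q j t) \<le> R" if j: "j \<in> {1..n}" for j t
  proof (rule per_bounded[where f="q j"])
    show "\<forall>t. q j (t + 2 * pi) = q j t" using per j by blast
    show "\<forall>t. norm (q j t) \<le> R \<or> t < 0 \<or> t > 2 * pi"
    proof
      fix t show "norm (q j t) \<le> R \<or> t < 0 \<or> t > 2 * pi"
        using R(2) j by (cases "0 \<le> t \<and> t \<le> 2 * pi") auto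
    qed
  qed
  define \<beta> where "\<beta> = \<alpha> + 1"
  have \<beta>: "\<beta> > 0" using alpha \<beta>_def by simp
  show "\<exists>C \<delta>. \<delta> > 0 \<and>
              (\<forall>pp qq. pp > 0 \<longrightarrow> qq > 0 \<longrightarrow> eps \<alpha> pp qq < \<delta> \<longrightarrow>
                (\<forall>\<tau>. \<forall>x\<in>K. \<exists>g. (GDERIV (\<lambda>y. hfun n \<alpha> m q pp qq y \<tau>) x :> g)
                      \<and> norm g \<le> C * (eps \<alpha> pp qq)\<^sup>2))"
  proof (rule exI[of _ "Ck d B \<beta> * R^2"], rule exI[of _ "min (d/2) 1 / R"], intro conjI allI impI ballI)
    show "0 < min (d/2) 1 / R" using d R by simp
    fix pp qq :: nat and \<tau> :: real and x :: "real^2"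
    assume pp: "pp > 0" and qq: "qq > 0" and ed: "eps \<alpha> pp qq < min (d/2) 1 / R" and xK: "x \<in> K"
    define e where "e = eps \<alpha> pp qq"
    have e0: "e \<ge> 0" unfolding e_def eps_def by simp
    define \<theta> where "\<theta> = - omega pp qq * \<tau> / nu qq"
    define c where "c = (\<lambda>j. e *\<^sub>R xbody q pp qq j \<tau>)"
    have eR: "e * R < min (d/2) 1" using ed R unfolding e_def by (simp add: pos_less_divide_eq)
    have cb: "\<forall>j\<in>{1..n}. norm (c j) \<le> e * R"
    proof
      fix j assume j: "j \<in> {1..n}"
      have "norm (c j) = e * norm (q j (\<tau> / nu qq))"
        unfolding c_def xbody_def using e0 by (simp add: norm_expJ)
      also have "\<dots> \<le> e * R" using qR[OF j] e0 by (simp add: mult_left_mono)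
      finally show "norm (c j) \<le> e * R" .
    qed
    have xd: "d \<le> norm x" "norm x \<le> B" using d B xK by auto
    have xc: "x \<noteq> c j" if "j \<in> {1..n}" for j
      using cb that eR xd d by force
    have x0: "x \<noteq> 0" using xd d by auto
    define G where "G = (\<lambda>j. (- (norm (x - c j) powr (-(\<alpha>+1)))) *\<^sub>R (x - c j) - (- (norm (x - 0) powr (-(\<alpha>+1)))) *\<^sub>R (x - 0))"
    have gj: "((\<lambda>y. phi \<alpha> (norm (y - c j)) - phi \<alpha> (norm (y - 0))) has_derivative (\<lambda>h. h \<bullet> G j)) (at x)"
      if "j \<in> {1..n}" for j
      using GDERIV_diff[OF grad_phi[OF alpha xc[OF that]] grad_phi[OF alpha x0]]
      unfolding gderiv_def G_def by simp
    have hd: "((\<lambda>y. \<Sum>j\<in>{1..n}. m j * (phi \<alpha> (norm (y - c j)) - phi \<alpha> (norm (y - 0))))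
        has_derivative (\<lambda>h. \<Sum>j\<in>{1..n}. m j * (h \<bullet> G j))) (at x)"
      by (intro has_derivative_sum has_derivative_mult_right gj)
    have hfeq: "(\<lambda>y. hfun n \<alpha> m q pp qq y \<tau>) = (\<lambda>y. \<Sum>j\<in>{1..n}. m j * (phi \<alpha> (norm (y - c j)) - phi \<alpha> (norm (y - 0))))"
      unfolding hfun_def c_def e_def by simp
    have deq: "(\<lambda>h. \<Sum>j\<in>{1..n}. m j * (h \<bullet> G j)) = (\<lambda>h. h \<bullet> (\<Sum>j\<in>{1..n}. m j *\<^sub>R G j))"
      by (simp add: inner_sum_right)
    have GD: "GDERIV (\<lambda>y. hfun n \<alpha> m q pp qq y \<tau>) x :> (\<Sum>j\<in>{1..n}. m j *\<^sub>R G j)"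
      unfolding gderiv_def hfeq using hd deq by simp
    have Geq: "(\<Sum>j\<in>{1..n}. m j *\<^sub>R G j) = (\<Sum>j\<in>{1..n}. m j *\<^sub>R (norm x powr (-\<beta>) *\<^sub>R x - norm (x - c j) powr (-\<beta>) *\<^sub>R (x - c j)))"
      unfolding G_def \<beta>_def by (simp add: algebra_simps)
    have csum: "(\<Sum>j\<in>{1..n}. m j *\<^sub>R c j) = 0"
    proof -
      have "(\<Sum>j\<in>{1..n}. m j *\<^sub>R c j) = e *\<^sub>R (\<Sum>j\<in>{1..n}. m j *\<^sub>R (expJ \<theta> *v q j (\<tau> / nu qq)))"
        unfolding c_def xbody_def \<theta>_def by (simp add: scaleR_sum_right mult.commute)
      also have "\<dots> = e *\<^sub>R (expJ \<theta> *v (\<Sum>j\<in>{1..n}. m j *\<^sub>R q j (\<tau> / nu qq)))"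
        by (simp add: expJ_sum)
      also have "\<dots> = 0" using com by simp
      finally show ?thesis .
    qed
    have mnn: "\<forall>j\<in>{1..n}. m j \<ge> 0" using mpos by auto
    have core_b: "norm (\<Sum>j\<in>{1..n}. m j *\<^sub>R (norm x powr (-\<beta>) *\<^sub>R x - norm (x - c j) powr (-\<beta>) *\<^sub>R (x - c j)))
        \<le> Ck d B \<beta> * (e * R)^2"
      by (rule core[OF _ mnn msum csum cb d(1) xd]) (use eR e0 R \<beta> in auto)
    show "\<exists>g. (GDERIV (\<lambda>y. hfun n \<alpha> m q pp qq y \<tau>) x :> g) \<and> norm g \<le> Ck d B \<beta> * R^2 * (eps \<alpha> pp qq)\<^sup>2"
      using GD core_b Geq unfolding e_def by (auto simp: power_mult_distrib algebra_simps)
  qed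
qed

end
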